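(* Let $\{\alpha_n\}_{n\ge0}$ be a sequence of positive reals and define $\gamma_0=1$, $\gamma_n=1+\sum_{i=0}^{n-1}\alpha_i$ for $n\ge1$. Suppose $\lim_{n\to\infty}\alpha_n=0$, $\limsup_{n\to\infty}|\alpha_{n+1}^{-1}-\alpha_n^{-1}|<\infty$, $\sum_{n=0}^\infty\alpha_n=\infty$, and there exists $r\in(1,\infty)$ with $\sum_{n=0}^\infty\alpha_n^2\gamma_n^{2r}<\infty$. Then there exists a real number $s\in(0,1)$ such that $\sum_{n=0}^\infty\alpha_n^{1+s}\gamma_n^r<\infty$. *)

theory Defs
  imports "HOL-Analysis.Analysis"
begin

end

theory Submission
  imports Defs
begin

lemma powr_mix_le:
  fixes a b t :: real
  assumes "a > 0" "b > 0" "0 \<le> t" "t \<le> 1"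
  shows "a powr t * b powr (1 - t) \<le> a + b"
proof -
  define m where "m = max a b"
  have m: "m > 0" "a \<le> m" "b \<le> m" using assms by (auto simp: m_def)
  have "a powr t \<le> m powr t" using assms m by (intro powr_mono2) auto
  moreover have "b powr (1 - t) \<le> m powr (1 - t)" using assms m by (intro powr_mono2) auto
  ultimately have "a powr t * b powr (1 - t) \<le> m powr t * m powr (1 - t)"
    by (intro mult_mono) auto
  also have "\<dots> = m" using m by (simp add: powr_add[symmetric])
  also have "\<dots> \<le> a + b" using assms by (auto simp: m_def)
  finally show ?thesis .
qed

theorem lemma2p2:
  fixes \<alpha> :: "nat \<Rightarrow> real" and \<gamma> :: "nat \<Rightarrow> real" and r :: real
  assumes pos: "\<And>n. \<alpha> n > 0"
    and gamma_def: "\<And>n. \<gamma> n = 1 + (\<Sum>i<n. \<alpha> i)"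
    and lim: "\<alpha> \<longlonglongrightarrow> 0"
    and lsup: "limsup (\<lambda>n. ereal \<bar>1 / \<alpha> (Suc n) - 1 / \<alpha> n\<bar>) < \<infinity>"
    and div: "\<not> summable \<alpha>"
    and r: "r > 1" and "summable (\<lambda>n. (\<alpha> n)\<^sup>2 * \<gamma> n powr (2 * r))"
  shows "\<exists>s::real. 0 < s \<and> s < 1 \<and> summable (\<lambda>n. \<alpha> n powr (1 + s) * \<gamma> n powr r)"
proof -
  define s where "s = (r + 2) / (2 * r + 2)"
  have s: "0 < s" "s < 1" using r by (auto simp: s_def field_simps)
  have gpos: "\<gamma> n \<ge> 1" for n
    using pos by (simp add: gamma_def sum_nonneg less_imp_le)
  have gsuc: "\<gamma> (Suc n) = \<gamma> n + \<alpha> n" for n by (simp add: gamma_def)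
  have dec: "decseq (\<lambda>n. 1 / \<gamma> n)"
  proof (rule decseq_SucI)
    fix n show "1 / \<gamma> (Suc n) \<le> 1 / \<gamma> n"
      using gpos[of n] pos[of n] by (simp add: gsuc frac_le)
  qed
  obtain L where L: "(\<lambda>n. 1 / \<gamma> n) \<longlonglongrightarrow> L"
    using decseq_convergent[OF dec, of 0] gpos by (metis less_le_trans zero_less_one divide_nonneg_pos less_imp_le zero_le_one)
  have tel: "summable (\<lambda>n. 2 * (1 / \<gamma> n - 1 / \<gamma> (Suc n)))"
    by (intro summable_mult telescope_summable'[OF L])
  have ev: "eventually (\<lambda>n. \<alpha> n < 1) sequentially"
    using lim by (simp add: order_tendstoD(2))
  have sb: "summable (\<lambda>n. \<alpha> n / (\<gamma> n)\<^sup>2)"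
  proof (rule summable_comparison_test_ev[OF _ tel])
    show "eventually (\<lambda>n. norm (\<alpha> n / (\<gamma> n)\<^sup>2) \<le> 2 * (1 / \<gamma> n - 1 / \<gamma> (Suc n))) sequentially"
      using ev
    proof eventually_elim
      case (elim n)
      have g: "\<gamma> n \<ge> 1" "\<alpha> n > 0" using gpos pos by auto
      have "1 / \<gamma> n - 1 / \<gamma> (Suc n) = \<alpha> n / (\<gamma> n * (\<gamma> n + \<alpha> n))"
        using g by (simp add: gsuc field_simps)
      moreover have "\<alpha> n / (\<gamma> n)\<^sup>2 \<le> 2 * (\<alpha> n / (\<gamma> n * (\<gamma> n + \<alpha> n)))"
      proof -
        have h: "\<gamma> n * (\<gamma> n + \<alpha> n) \<le> 2 * (\<gamma> n * \<gamma> n)" 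
        proof -
          have "\<gamma> n * \<alpha> n \<le> \<gamma> n * \<gamma> n" using g elim by (intro mult_left_mono) auto
          then show ?thesis by (simp add: algebra_simps)
        qed
        have "\<alpha> n / (\<gamma> n * \<gamma> n) = 2 * \<alpha> n / (2 * (\<gamma> n * \<gamma> n))" by simp
        also have "\<dots> \<le> 2 * \<alpha> n / (\<gamma> n * (\<gamma> n + \<alpha> n))"
          using g h by (intro divide_left_mono) auto
        finally show ?thesis by (simp add: power2_eq_square)
      qed
      ultimately show ?case using g by simp
    qed
  qed
  have key: "\<alpha> n powr (1 + s) * \<gamma> n powr r
      = ((\<alpha> n)\<^sup>2 * \<gamma> n powr (2 * r)) powr s * (\<alpha> n / (\<gamma> n)\<^sup>2) powr (1 - s)" for n
  proof -
    have a: "\<alpha> n > 0" and g: "\<gamma> n > 0" using pos gpos[of n] by auto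
    have e: "(1 + s) * ln (\<alpha> n) + r * ln (\<gamma> n)
       = s * (2 * ln (\<alpha> n) + 2 * r * ln (\<gamma> n)) + (1 - s) * (ln (\<alpha> n) - 2 * ln (\<gamma> n))"
    proof -
      have s2: "s * (2 * r + 2) = r + 2" using r by (simp add: s_def)
      have "2 * r * s - 2 * (1 - s) = r" using s2 by (simp add: algebra_simps)
      then have "r * ln (\<gamma> n) = (2 * r * s - 2 * (1 - s)) * ln (\<gamma> n)" by simp
      then show ?thesis by (simp add: algebra_simps)
    qed
    have s2: "s * (2 * r + 2) = r + 2" using r by (simp add: s_def)
    have f: "r * ln (\<gamma> n) + 2 * ln (\<gamma> n) = s * (2 * ln (\<gamma> n)) + r * (s * (2 * ln (\<gamma> n)))"
    proof -
      have "r * ln (\<gamma> n) + 2 * ln (\<gamma> n) = (s * (2 * r + 2)) * ln (\<gamma> n)" using s2 by (simp add: algebra_simps)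
      then show ?thesis by (simp add: algebra_simps)
    qed
    show ?thesis using a g f
      by (simp add: powr_def ln_mult ln_div exp_add[symmetric] e ln_realpow power2_eq_square algebra_simps)
  qed
  have "summable (\<lambda>n. \<alpha> n powr (1 + s) * \<gamma> n powr r)"
  proof (rule summable_comparison_test[OF _ summable_add[OF assms(7) sb]])
    show "\<exists>N. \<forall>n\<ge>N. norm (\<alpha> n powr (1 + s) * \<gamma> n powr r)
            \<le> (\<alpha> n)\<^sup>2 * \<gamma> n powr (2 * r) + \<alpha> n / (\<gamma> n)\<^sup>2"
    proof (intro exI allI impI)
      fix n :: nat
      have a: "\<alpha> n > 0" and g: "\<gamma> n > 0" using pos gpos[of n] by auto
      have "norm (\<alpha> n powr (1 + s) * \<gamma> n powr r) = \<alpha> n powr (1 + s) * \<gamma> n powr r" by simp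
      also have "\<dots> \<le> (\<alpha> n)\<^sup>2 * \<gamma> n powr (2 * r) + \<alpha> n / (\<gamma> n)\<^sup>2"
        unfolding key using a g s by (intro powr_mix_le) auto
      finally show "norm (\<alpha> n powr (1 + s) * \<gamma> n powr r)
            \<le> (\<alpha> n)\<^sup>2 * \<gamma> n powr (2 * r) + \<alpha> n / (\<gamma> n)\<^sup>2" .
    qed
  qed
  then show ?thesis using s by blast
qed

end
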